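(* Consider a finite discounted MDP with $A$ actions, rewards in $[0,1]$, discount $\gamma\in[0,1)$ and initial distribution $\rho$. For $\tau>0$ let $\tilde V^\pi_\tau(\rho):=V^\pi(\rho)+\tau\mathbb{H}(\pi)$ and $\tilde V^*_\tau(\rho):=\max_\pi\tilde V^\pi_\tau(\rho)$. For a fixed softmax policy $\pi_\theta$ and $0<\tau_2<\tau_1$, $$\tilde V^*_{\tau_2}(\rho)-\tilde V^{\pi_\theta}_{\tau_2}(\rho)\le\tilde V^*_{\tau_1}(\rho)-\tilde V^{\pi_\theta}_{\tau_1}(\rho)+\frac{2\tau_1\log A}{1-\gamma}.$$
   Context: $V^\pi(\rho)=\mathbb{E}_{s_0\sim\rho}\mathbb{E}^\pi[\sum_{t\ge0}\gamma^tr(s_t,a_t)]$ and $\mathbb{H}(\pi):=\mathbb{E}_{s_0\sim\rho,a_t\sim\pi(\cdot|s_t),s_{t+1}\sim\mathcal{P}(\cdot|s_t,a_t)}[\sum_{t\ge0}-\gamma^t\log\pi(a_t\mid s_t)]$ (discounted entropy). *)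

theory Defs
  imports "HOL-Analysis.Analysis"
begin

text \<open>Transition kernel P s a s', reward r s a, initial distribution \<rho>.
  Stationary stochastic policies \<pi> s a = \<pi>(a|s).\<close>

definition is_dist :: "('b::finite \<Rightarrow> real) \<Rightarrow> bool" where
  "is_dist p \<longleftrightarrow> (\<forall>x. 0 \<le> p x) \<and> (\<Sum>x\<in>UNIV. p x) = 1"

definition is_policy :: "('s::finite \<Rightarrow> 'a::finite \<Rightarrow> real) \<Rightarrow> bool" where
  "is_policy \<pi> \<longleftrightarrow> (\<forall>s. is_dist (\<pi> s))"

definition is_kernel :: "('s::finite \<Rightarrow> 'a::finite \<Rightarrow> 's \<Rightarrow> real) \<Rightarrow> bool" where
  "is_kernel P \<longleftrightarrow> (\<forall>s a. is_dist (P s a))"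

primrec state_dist ::
  "('s::finite \<Rightarrow> 'a::finite \<Rightarrow> 's \<Rightarrow> real) \<Rightarrow> ('s \<Rightarrow> 'a \<Rightarrow> real) \<Rightarrow> ('s \<Rightarrow> real) \<Rightarrow> nat \<Rightarrow> 's \<Rightarrow> real" where
  "state_dist P \<pi> \<rho> 0 = \<rho>"
| "state_dist P \<pi> \<rho> (Suc t) =
     (\<lambda>s'. \<Sum>s\<in>UNIV. state_dist P \<pi> \<rho> t s * (\<Sum>a\<in>UNIV. \<pi> s a * P s a s'))"

definition value_fn ::
  "('s::finite \<Rightarrow> 'a::finite \<Rightarrow> 's \<Rightarrow> real) \<Rightarrow> ('s \<Rightarrow> 'a \<Rightarrow> real) \<Rightarrow> real \<Rightarrow> ('s \<Rightarrow> 'a \<Rightarrow> real) \<Rightarrow> ('s \<Rightarrow> real) \<Rightarrow> real" where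
  "value_fn P r \<gamma> \<pi> \<rho> =
     (\<Sum>t. \<gamma> ^ t * (\<Sum>s\<in>UNIV. state_dist P \<pi> \<rho> t s * (\<Sum>a\<in>UNIV. \<pi> s a * r s a)))"

text \<open>Discounted entropy H(\<pi>) = E[\<Sum>_t -\<gamma>^t log \<pi>(a_t|s_t)] (with 0 log 0 = 0, as ln 0 = 0).\<close>
definition disc_entropy ::
  "('s::finite \<Rightarrow> 'a::finite \<Rightarrow> 's \<Rightarrow> real) \<Rightarrow> real \<Rightarrow> ('s \<Rightarrow> 'a \<Rightarrow> real) \<Rightarrow> ('s \<Rightarrow> real) \<Rightarrow> real" where
  "disc_entropy P \<gamma> \<pi> \<rho> =
     (\<Sum>t. \<gamma> ^ t * (\<Sum>s\<in>UNIV. state_dist P \<pi> \<rho> t s * (\<Sum>a\<in>UNIV. - (\<pi> s a * ln (\<pi> s a)))))"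

definition reg_value ::
  "('s::finite \<Rightarrow> 'a::finite \<Rightarrow> 's \<Rightarrow> real) \<Rightarrow> ('s \<Rightarrow> 'a \<Rightarrow> real) \<Rightarrow> real \<Rightarrow> real \<Rightarrow> ('s \<Rightarrow> 'a \<Rightarrow> real) \<Rightarrow> ('s \<Rightarrow> real) \<Rightarrow> real" where
  "reg_value P r \<gamma> \<tau> \<pi> \<rho> = value_fn P r \<gamma> \<pi> \<rho> + \<tau> * disc_entropy P \<gamma> \<pi> \<rho>"

definition opt_reg_value ::
  "('s::finite \<Rightarrow> 'a::finite \<Rightarrow> 's \<Rightarrow> real) \<Rightarrow> ('s \<Rightarrow> 'a \<Rightarrow> real) \<Rightarrow> real \<Rightarrow> real \<Rightarrow> ('s \<Rightarrow> real) \<Rightarrow> real" where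
  "opt_reg_value P r \<gamma> \<tau> \<rho> = (SUP \<pi>\<in>{\<pi>. is_policy \<pi>}. reg_value P r \<gamma> \<tau> \<pi> \<rho>)"

definition softmax :: "('s \<Rightarrow> 'a::finite \<Rightarrow> real) \<Rightarrow> 's \<Rightarrow> 'a \<Rightarrow> real" where
  "softmax \<theta> s a = exp (\<theta> s a) / (\<Sum>a'\<in>UNIV. exp (\<theta> s a'))"

end

theory Submission
  imports Defs
begin

lemma dist_weighted:
  fixes d :: "'s::finite \<Rightarrow> real"
  assumes "is_dist d" "\<And>s. 0 \<le> g s \<and> g s \<le> B"
  shows "0 \<le> (\<Sum>s\<in>UNIV. d s * g s) \<and> (\<Sum>s\<in>UNIV. d s * g s) \<le> B"
proof
  show "0 \<le> (\<Sum>s\<in>UNIV. d s * g s)"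
    using assms by (intro sum_nonneg) (simp add: is_dist_def)
  have "(\<Sum>s\<in>UNIV. d s * g s) \<le> (\<Sum>s\<in>UNIV. d s * B)"
    using assms by (intro sum_mono mult_left_mono) (auto simp: is_dist_def)
  also have "\<dots> = B" using assms by (simp add: is_dist_def flip: sum_distrib_right)
  finally show "(\<Sum>s\<in>UNIV. d s * g s) \<le> B" .
qed

lemma state_dist_dist:
  assumes "is_kernel P" "is_policy \<pi>" "is_dist \<rho>"
  shows "is_dist (state_dist P \<pi> \<rho> t)"
proof (induction t)
  case 0 then show ?case using assms by simp
next
  case (Suc t)
  let ?d = "state_dist P \<pi> \<rho> t"
  have nn: "0 \<le> ?d s" "0 \<le> \<pi> s a" "0 \<le> P s a s'" for s a s'
    using Suc assms by (auto simp: is_dist_def is_policy_def is_kernel_def)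
  have "(\<Sum>s'\<in>UNIV. \<Sum>s\<in>UNIV. ?d s * (\<Sum>a\<in>UNIV. \<pi> s a * P s a s'))
     = (\<Sum>s\<in>UNIV. ?d s * (\<Sum>a\<in>UNIV. \<pi> s a * (\<Sum>s'\<in>UNIV. P s a s')))"
  proof -
    have "(\<Sum>s'\<in>UNIV. \<Sum>s\<in>UNIV. ?d s * (\<Sum>a\<in>UNIV. \<pi> s a * P s a s'))
       = (\<Sum>s\<in>UNIV. \<Sum>s'\<in>UNIV. ?d s * (\<Sum>a\<in>UNIV. \<pi> s a * P s a s'))"
      by (rule sum.swap)
    also have "\<dots> = (\<Sum>s\<in>UNIV. ?d s * (\<Sum>s'\<in>UNIV. \<Sum>a\<in>UNIV. \<pi> s a * P s a s'))"
      by (simp add: sum_distrib_left)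
    also have "\<dots> = (\<Sum>s\<in>UNIV. ?d s * (\<Sum>a\<in>UNIV. \<Sum>s'\<in>UNIV. \<pi> s a * P s a s'))"
      by (subst (2) sum.swap) simp
    also have "\<dots> = (\<Sum>s\<in>UNIV. ?d s * (\<Sum>a\<in>UNIV. \<pi> s a * (\<Sum>s'\<in>UNIV. P s a s')))"
      by (simp add: sum_distrib_left)
    finally show ?thesis .
  qed
  also have "\<dots> = (\<Sum>s\<in>UNIV. ?d s)"
    using assms by (simp add: is_kernel_def is_dist_def is_policy_def)
  also have "\<dots> = 1" using Suc by (simp add: is_dist_def)
  finally show ?case using nn
    by (auto simp: is_dist_def intro!: sum_nonneg mult_nonneg_nonneg)
qed

lemma series_bound:
  fixes f :: "nat \<Rightarrow> real"
  assumes "0 \<le> \<gamma>" "\<gamma> < 1" "\<And>t. 0 \<le> f t \<and> f t \<le> B"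
  shows "0 \<le> (\<Sum>t. \<gamma>^t * f t) \<and> (\<Sum>t. \<gamma>^t * f t) \<le> B / (1 - \<gamma>)"
proof -
  have g: "summable (\<lambda>t. B * \<gamma>^t)"
    using assms by (intro summable_mult summable_geometric) auto
  have le: "norm (\<gamma>^t * f t) \<le> B * \<gamma>^t" for t
    using assms(1) assms(3)[of t] by (simp add: abs_mult) (metis mult.commute mult_right_mono zero_le_power)
  have s: "summable (\<lambda>t. \<gamma>^t * f t)"
    by (rule summable_comparison_test[OF _ g]) (use le in auto)
  have "0 \<le> (\<Sum>t. \<gamma>^t * f t)"
    using assms by (intro suminf_nonneg s) auto
  moreover have "(\<Sum>t. \<gamma>^t * f t) \<le> (\<Sum>t. B * \<gamma>^t)"
    using le by (intro suminf_le s g) (auto dest: abs_le_D1)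
  moreover have "(\<Sum>t. B * \<gamma>^t) = B / (1 - \<gamma>)"
    using assms by (simp add: suminf_mult suminf_geometric)
  ultimately show ?thesis by simp
qed

lemma ent_term:
  fixes p n :: real
  assumes "0 \<le> p" "p \<le> 1" "n \<ge> 1"
  shows "0 \<le> - (p * ln p) \<and> - (p * ln p) \<le> p * ln n + 1 / n - p"
proof
  show "0 \<le> - (p * ln p)"
    using assms by (cases "p = 0") (auto simp: mult_nonneg_nonpos)
  show "- (p * ln p) \<le> p * ln n + 1 / n - p"
  proof (cases "p = 0")
    case True then show ?thesis using assms by simp
  next
    case False
    then have pp: "p > 0" using assms by simp
    have "ln (1 / (n * p)) \<le> 1 / (n * p) - 1"
      using pp assms by (intro ln_le_minus_one) auto
    then have "p * ln (1 / (n * p)) \<le> p * (1 / (n * p) - 1)"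
      using pp by (simp add: mult_left_mono)
    moreover have "ln (1 / (n * p)) = - ln n - ln p"
      using pp assms by (simp add: ln_div ln_mult)
    moreover have "p * (1 / (n * p) - 1) = 1 / n - p"
      using pp assms by (simp add: field_simps)
    ultimately show ?thesis by (simp add: algebra_simps)
  qed
qed

lemma ent_bound:
  fixes p :: "'a::finite \<Rightarrow> real"
  assumes "is_dist p"
  shows "0 \<le> (\<Sum>a\<in>UNIV. - (p a * ln (p a))) \<and>
         (\<Sum>a\<in>UNIV. - (p a * ln (p a))) \<le> ln (real CARD('a))"
proof
  let ?n = "real CARD('a)"
  have n1: "?n \<ge> 1" by simp
  have p01: "0 \<le> p a \<and> p a \<le> 1" for a
  proof -
    have "p a \<le> (\<Sum>b\<in>UNIV. p b)"
      using assms by (intro member_le_sum) (auto simp: is_dist_def)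
    then show ?thesis using assms by (simp add: is_dist_def)
  qed
  show "0 \<le> (\<Sum>a\<in>UNIV. - (p a * ln (p a)))"
    using ent_term[OF _ _ n1] p01 by (intro sum_nonneg) blast
  have "(\<Sum>a\<in>UNIV. - (p a * ln (p a))) \<le> (\<Sum>a\<in>UNIV. p a * ln ?n + 1 / ?n - p a)"
    using ent_term[OF _ _ n1] p01 by (intro sum_mono) blast
  also have "\<dots> = ln ?n"
    using assms by (simp add: sum_subtractf sum.distrib is_dist_def flip: sum_distrib_right)
  finally show "(\<Sum>a\<in>UNIV. - (p a * ln (p a))) \<le> ln ?n" .
qed

lemma value_bounds:
  assumes "is_kernel P" "is_policy \<pi>" "is_dist \<rho>" "0 \<le> \<gamma>" "\<gamma> < 1"
    and r: "\<And>s a. 0 \<le> r s a \<and> r s a \<le> 1"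
  shows "0 \<le> value_fn P r \<gamma> \<pi> \<rho> \<and> value_fn P r \<gamma> \<pi> \<rho> \<le> 1 / (1 - \<gamma>)"
proof -
  have "0 \<le> (\<Sum>a\<in>UNIV. \<pi> s a * r s a) \<and> (\<Sum>a\<in>UNIV. \<pi> s a * r s a) \<le> 1" for s
    using assms by (intro dist_weighted) (auto simp: is_policy_def)
  then have "0 \<le> (\<Sum>s\<in>UNIV. state_dist P \<pi> \<rho> t s * (\<Sum>a\<in>UNIV. \<pi> s a * r s a)) \<and>
     (\<Sum>s\<in>UNIV. state_dist P \<pi> \<rho> t s * (\<Sum>a\<in>UNIV. \<pi> s a * r s a)) \<le> 1" for t
    by (rule dist_weighted[OF state_dist_dist[OF assms(1-3)]])
  then show ?thesis unfolding value_fn_def using assms by (intro series_bound) auto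
qed

lemma entropy_bounds:
  fixes P :: "'s::finite \<Rightarrow> 'a::finite \<Rightarrow> 's \<Rightarrow> real"
  assumes "is_kernel P" "is_policy \<pi>" "is_dist \<rho>" "0 \<le> \<gamma>" "\<gamma> < 1"
  shows "0 \<le> disc_entropy P \<gamma> \<pi> \<rho> \<and> disc_entropy P \<gamma> \<pi> \<rho> \<le> ln (real CARD('a)) / (1 - \<gamma>)"
proof -
  have "0 \<le> (\<Sum>a\<in>UNIV. - (\<pi> s a * ln (\<pi> s a))) \<and> (\<Sum>a\<in>UNIV. - (\<pi> s a * ln (\<pi> s a))) \<le> ln (real CARD('a))" for s
    using assms by (intro ent_bound) (auto simp: is_policy_def)
  then have "0 \<le> (\<Sum>s\<in>UNIV. state_dist P \<pi> \<rho> t s * (\<Sum>a\<in>UNIV. - (\<pi> s a * ln (\<pi> s a)))) \<and>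
     (\<Sum>s\<in>UNIV. state_dist P \<pi> \<rho> t s * (\<Sum>a\<in>UNIV. - (\<pi> s a * ln (\<pi> s a)))) \<le> ln (real CARD('a))" for t
    by (rule dist_weighted[OF state_dist_dist[OF assms(1-3)]])
  then show ?thesis unfolding disc_entropy_def using assms by (intro series_bound) auto
qed

lemma softmax_policy: "is_policy (softmax \<theta>)"
proof -
  have pos: "(\<Sum>a'\<in>UNIV. exp (\<theta> s a')) > 0" for s
    by (intro sum_pos) auto
  show ?thesis
    unfolding is_policy_def is_dist_def softmax_def
    using pos by (auto simp: less_imp_le simp flip: sum_divide_distrib) (metis less_irrefl)
qed

theorem lemma20:
  fixes P :: "'s::finite \<Rightarrow> 'a::finite \<Rightarrow> 's \<Rightarrow> real"
    and r :: "'s \<Rightarrow> 'a \<Rightarrow> real"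
    and \<rho> :: "'s \<Rightarrow> real"
    and \<theta> :: "'s \<Rightarrow> 'a \<Rightarrow> real"
    and \<gamma> \<tau>\<^sub>1 \<tau>\<^sub>2 :: real
  assumes "is_kernel P"
    and "\<And>s a. 0 \<le> r s a \<and> r s a \<le> 1"
    and "is_dist \<rho>"
    and "0 \<le> \<gamma>" and "\<gamma> < 1"
    and "0 < \<tau>\<^sub>2" and "\<tau>\<^sub>2 < \<tau>\<^sub>1"
  shows "opt_reg_value P r \<gamma> \<tau>\<^sub>2 \<rho> - reg_value P r \<gamma> \<tau>\<^sub>2 (softmax \<theta>) \<rho>
       \<le> opt_reg_value P r \<gamma> \<tau>\<^sub>1 \<rho> - reg_value P r \<gamma> \<tau>\<^sub>1 (softmax \<theta>) \<rho>
         + 2 * \<tau>\<^sub>1 * ln (real CARD('a)) / (1 - \<gamma>)"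
proof -
  define L where "L = ln (real CARD('a)) / (1 - \<gamma>)"
  have L0: "0 \<le> L" unfolding L_def using assms by simp
  have EB: "is_policy \<pi> \<Longrightarrow> 0 \<le> disc_entropy P \<gamma> \<pi> \<rho> \<and> disc_entropy P \<gamma> \<pi> \<rho> \<le> L" for \<pi>
    unfolding L_def using entropy_bounds[OF assms(1) _ assms(3-5)] by blast
  have VB: "is_policy \<pi> \<Longrightarrow> value_fn P r \<gamma> \<pi> \<rho> \<le> 1 / (1 - \<gamma>)" for \<pi>
    using value_bounds[of P \<pi> \<rho> \<gamma> r] assms by blast
  have ne: "{\<pi>. is_policy \<pi>} \<noteq> {}" using softmax_policy by blast
  have bdd: "bdd_above ((\<lambda>\<pi>. reg_value P r \<gamma> \<tau>\<^sub>1 \<pi> \<rho>) ` {\<pi>. is_policy \<pi>})"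
  proof (rule bdd_aboveI2)
    fix \<pi> :: "'s \<Rightarrow> 'a \<Rightarrow> real" assume "\<pi> \<in> {\<pi>. is_policy \<pi>}"
    then have "is_policy \<pi>" by simp
    then show "reg_value P r \<gamma> \<tau>\<^sub>1 \<pi> \<rho> \<le> 1 / (1 - \<gamma>) + \<tau>\<^sub>1 * L"
      unfolding reg_value_def using EB VB assms(6,7)
      by (smt (verit, best) mult_left_mono)
  qed
  have opt: "opt_reg_value P r \<gamma> \<tau>\<^sub>2 \<rho> \<le> opt_reg_value P r \<gamma> \<tau>\<^sub>1 \<rho>"
    unfolding opt_reg_value_def
  proof (rule cSUP_least[OF ne])
    fix \<pi> :: "'s \<Rightarrow> 'a \<Rightarrow> real" assume h: "\<pi> \<in> {\<pi>. is_policy \<pi>}"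
    then have "reg_value P r \<gamma> \<tau>\<^sub>2 \<pi> \<rho> \<le> reg_value P r \<gamma> \<tau>\<^sub>1 \<pi> \<rho>"
      unfolding reg_value_def using EB[of \<pi>] assms(6,7)
      by (simp add: mult_right_mono)
    also have "\<dots> \<le> (SUP \<pi>\<in>{\<pi>. is_policy \<pi>}. reg_value P r \<gamma> \<tau>\<^sub>1 \<pi> \<rho>)"
      by (rule cSUP_upper[OF h bdd])
    finally show "reg_value P r \<gamma> \<tau>\<^sub>2 \<pi> \<rho> \<le> (SUP \<pi>\<in>{\<pi>. is_policy \<pi>}. reg_value P r \<gamma> \<tau>\<^sub>1 \<pi> \<rho>)" .
  qed
  have H: "0 \<le> disc_entropy P \<gamma> (softmax \<theta>) \<rho> \<and> disc_entropy P \<gamma> (softmax \<theta>) \<rho> \<le> L"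
    using EB softmax_policy by blast
  have "(\<tau>\<^sub>1 - \<tau>\<^sub>2) * disc_entropy P \<gamma> (softmax \<theta>) \<rho> \<le> \<tau>\<^sub>1 * L"
    using H assms(6,7) by (smt (verit, best) mult_left_mono mult_right_mono)
  moreover have "2 * \<tau>\<^sub>1 * ln (real CARD('a)) / (1 - \<gamma>) = 2 * (\<tau>\<^sub>1 * L)"
    unfolding L_def by simp
  moreover have "0 \<le> \<tau>\<^sub>1 * L" using L0 assms by simp
  ultimately show ?thesis using opt unfolding reg_value_def by (simp add: algebra_simps)
qed

end
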